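(* There exist $\epsilon_0>0$ and $C>0$, independent of $\nu,k,\lambda$, such that for $0<\nu\le1$, $10\nu\le|k|<1$, $\lambda\in\mathbb R$, $0\le\epsilon\le\epsilon_0$ and $F\in L^2(I)$, $$(1+|\lambda-1|)|c_1(\lambda)|+(1+|\lambda+1|)|c_2(\lambda)|\le C\nu^{-1/6}|k|^{-5/6}\|F\|_{L^2}.$$
   Context: Let $I=(-1,1)$, $\nu>0$, $k\ne0$, $\lambda\in\mathbb R$, $\epsilon\ge0$. Let $w_{Na}$ solve the Navier-slip resolvent problem $-\nu(w''-k^2w)+ik(y-\lambda)w-\epsilon\nu^{1/3}|k|^{2/3}w=F$ on $I$, $w(\pm1)=0$. Define $$c_1(\lambda)=\int_{-1}^1\frac{\sinh k(y+1)}{\sinh 2k}w_{Na}(y)\,dy,\qquad c_2(\lambda)=\int_{-1}^1\frac{\sinh k(1-y)}{\sinh 2k}w_{Na}(y)\,dy.$$ *)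

theory Defs
  imports "HOL-Analysis.Analysis"
begin

definition is_L2 :: "(real \<Rightarrow> complex) \<Rightarrow> bool" where
  "is_L2 F \<longleftrightarrow> F \<in> borel_measurable (lebesgue_on {-1..1})
      \<and> integrable (lebesgue_on {-1..1}) (\<lambda>y. (cmod (F y))^2)"

definition L2norm :: "(real \<Rightarrow> complex) \<Rightarrow> real" where
  "L2norm F = sqrt (LINT y|lebesgue_on {-1..1}. (cmod (F y))^2)"

text \<open>w is a (strong, H^2) solution of
  -nu (w'' - k^2 w) + i k (y - lam) w - eps nu^(1/3) |k|^(2/3) w = F on I, w(-1) = w(1) = 0:
  w is C^1 on [-1,1] and w' is the indefinite integral of the w'' dictated by the equation.\<close>
definition resolvent_sol ::
  "real \<Rightarrow> real \<Rightarrow> real \<Rightarrow> real \<Rightarrow> (real \<Rightarrow> complex) \<Rightarrow> (real \<Rightarrow> complex) \<Rightarrow> bool" where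
  "resolvent_sol nu k lam eps F w \<longleftrightarrow>
     w (-1) = 0 \<and> w 1 = 0 \<and>
     (\<exists>w'. (\<forall>y\<in>{-1..1}. (w has_vector_derivative w' y) (at y within {-1..1})) \<and>
       (\<forall>y\<in>{-1..1}.
          ((\<lambda>s. complex_of_real (k^2) * w s
               + (\<i> * complex_of_real (k * (s - lam)) * w s
                  - complex_of_real (eps * nu powr (1/3) * \<bar>k\<bar> powr (2/3)) * w s
                  - F s) / complex_of_real nu)
            has_integral (w' y - w' (-1))) {-1..y}))"

definition c1 :: "real \<Rightarrow> (real \<Rightarrow> complex) \<Rightarrow> complex" where
  "c1 k w = integral {-1..1} (\<lambda>y. complex_of_real (sinh (k * (y + 1)) / sinh (2 * k)) * w y)"

definition c2 :: "real \<Rightarrow> (real \<Rightarrow> complex) \<Rightarrow> complex" where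
  "c2 k w = integral {-1..1} (\<lambda>y. complex_of_real (sinh (k * (1 - y)) / sinh (2 * k)) * w y)"

end

theory Submission
  imports Defs "HOL-Analysis.Analysis"
begin

lemma ibp_core:
  fixes g q :: "real \<Rightarrow> complex"
  assumes ab: "a \<le> b" and g: "g absolutely_integrable_on {a..b}" and q: "continuous_on {a..b} q"
  shows "integral {a..b} (\<lambda>s. g s * integral {s..b} q) = integral {a..b} (\<lambda>t. q t * integral {a..t} g)"
proof -
  define M where "M = lebesgue_on {a..b}"
  interpret M: finite_measure M unfolding M_def by (rule finite_measure_lebesgue_on) auto
  interpret P: pair_sigma_finite M M by unfold_locales
  have spM: "space M = {a..b}" unfolding M_def by simp
  have gM[measurable]: "g \<in> borel_measurable M"
    unfolding M_def using g absolutely_integrable_measurable[of "{a..b}" g] by simp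
  have gI: "integrable M g"
    unfolding M_def using g by (simp add: integrable_restrict_space set_integrable_def)
  have qM[measurable]: "q \<in> borel_measurable M"
    unfolding M_def by (rule continuous_imp_measurable_on_sets_lebesgue[OF q]) auto
  have idM[measurable]: "(\<lambda>x. x) \<in> borel_measurable M"
    unfolding M_def by (rule continuous_imp_measurable_on_sets_lebesgue) (auto intro: continuous_intros)
  obtain B where B0: "\<forall>t\<in>{a..b}. norm (q t) \<le> B"
    using compact_imp_bounded[OF compact_continuous_image[OF q compact_Icc]]
    unfolding bounded_iff by auto
  have B: "norm (q t) \<le> B" if "t \<in> {a..b}" for t using B0 that by blast
  have Bnn: "0 \<le> B" using B[of a] ab norm_ge_zero[of "q a"] by (meson atLeastAtMost_iff order_refl order_trans)
  define f where "f = (\<lambda>s t. if s \<le> t then g s * q t else 0)"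
  have fM[measurable]: "case_prod f \<in> borel_measurable (M \<Otimes>\<^sub>M M)"
    unfolding f_def by measurable
  have fb: "norm (f s t) \<le> norm (g s) * B" if "t \<in> {a..b}" for s t
    using B[OF that] Bnn unfolding f_def by (auto simp: norm_mult intro: mult_left_mono)
  have fsM: "f s \<in> borel_measurable M" for s
    unfolding f_def by measurable
  have inner_int: "integrable M (\<lambda>t. f s t)" for s
    using fsM by (intro M.integrable_const_bound[where B="norm (g s) * B"]) (auto simp: spM fb fsM)
  have fI: "integrable (M \<Otimes>\<^sub>M M) (case_prod f)"
  proof (rule P.Fubini_integrable)
    show "integrable M (\<lambda>x. \<integral>y. norm (case_prod f (x, y)) \<partial>M)"
    proof (rule Bochner_Integration.integrable_bound)
      show "integrable M (\<lambda>x. norm (g x) * B * measure M (space M))"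
        using gI by auto
      show "(\<lambda>x. \<integral>y. norm (case_prod f (x, y)) \<partial>M) \<in> borel_measurable M"
        by measurable
      show "AE x in M. norm (\<integral>y. norm (case_prod f (x, y)) \<partial>M) \<le> norm (norm (g x) * B * measure M (space M))"
      proof (rule AE_I2)
        fix x assume "x \<in> space M"
        have "norm (\<integral>y. norm (case_prod f (x, y)) \<partial>M) = (\<integral>y. norm (f x y) \<partial>M)"
          by (simp add: integral_nonneg_AE)
        also have "\<dots> \<le> (\<integral>y. norm (g x) * B \<partial>M)"
          by (rule integral_mono) (use inner_int fb spM in auto)
        also have "\<dots> = norm (g x) * B * measure M (space M)" by simp
        also have "\<dots> \<le> norm (norm (g x) * B * measure M (space M))" by simp
        finally show "norm (\<integral>y. norm (case_prod f (x, y)) \<partial>M) \<le> norm (norm (g x) * B * measure M (space M))" .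
      qed
    qed
    show "AE x in M. integrable M (\<lambda>y. case_prod f (x, y))"
      using inner_int by simp
  qed fact
  have fub: "(\<integral>t. (\<integral>s. f s t \<partial>M) \<partial>M) = (\<integral>s. (\<integral>t. f s t \<partial>M) \<partial>M)"
    by (rule P.Fubini_integral[OF fI])
  have i1: "(\<integral>t. f s t \<partial>M) = g s * integral {s..b} q" if "s \<in> {a..b}" for s
  proof -
    have "(\<integral>t. f s t \<partial>M) = (\<integral>t. g s * (if t \<in> {s..} then q t else 0) \<partial>M)"
      unfolding f_def by (rule Bochner_Integration.integral_cong) auto
    also have "\<dots> = g s * (\<integral>t. (if t \<in> {s..} then q t else 0) \<partial>M)" by simp
    also have "(\<integral>t. (if t \<in> {s..} then q t else 0) \<partial>M) = integral {a..b} (\<lambda>t. if t \<in> {s..} then q t else 0)"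
      unfolding M_def
    proof (rule lebesgue_integral_eq_integral)
      show "integrable (lebesgue_on {a..b}) (\<lambda>t. if t \<in> {s..} then q t else 0)"
        unfolding M_def[symmetric]
        by (rule M.integrable_const_bound[where B=B]) (auto simp: spM B Bnn)
    qed auto
    also have "\<dots> = integral {s..b} q"
      using that by (subst integral_restrict_Int) (auto intro!: arg_cong2[where f=integral])
    finally show ?thesis .
  qed
  have i2: "(\<integral>s. f s t \<partial>M) = q t * integral {a..t} g" if "t \<in> {a..b}" for t
  proof -
    have "(\<integral>s. f s t \<partial>M) = (\<integral>s. q t * (if s \<in> {..t} then g s else 0) \<partial>M)"
      unfolding f_def by (rule Bochner_Integration.integral_cong) auto
    also have "\<dots> = q t * (\<integral>s. (if s \<in> {..t} then g s else 0) \<partial>M)" by simp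
    also have "(\<integral>s. (if s \<in> {..t} then g s else 0) \<partial>M) = integral {a..b} (\<lambda>s. if s \<in> {..t} then g s else 0)"
      unfolding M_def
    proof (rule lebesgue_integral_eq_integral)
      show "integrable (lebesgue_on {a..b}) (\<lambda>s. if s \<in> {..t} then g s else 0)"
        unfolding M_def[symmetric]
        by (rule Bochner_Integration.integrable_bound[OF gI]) auto
    qed auto
    also have "\<dots> = integral {a..t} g"
      using that by (subst integral_restrict_Int) (auto intro!: arg_cong2[where f=integral])
    finally show ?thesis .
  qed
  have I1: "integrable M (\<lambda>s. \<integral>t. f s t \<partial>M)" using P.integrable_fst[OF fI] .
  have I2: "integrable M (\<lambda>t. \<integral>s. f s t \<partial>M)" using P.integrable_snd[OF fI] .
  have "integral {a..b} (\<lambda>s. g s * integral {s..b} q) = integral {a..b} (\<lambda>s. \<integral>t. f s t \<partial>M)"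
    by (rule integral_cong) (simp add: i1)
  also have "\<dots> = (\<integral>s. (\<integral>t. f s t \<partial>M) \<partial>M)"
    using I1 unfolding M_def by (subst lebesgue_integral_eq_integral) auto
  also have "\<dots> = (\<integral>t. (\<integral>s. f s t \<partial>M) \<partial>M)" using fub by simp
  also have "\<dots> = integral {a..b} (\<lambda>t. \<integral>s. f s t \<partial>M)"
    using I2 unfolding M_def by (subst lebesgue_integral_eq_integral) auto
  also have "\<dots> = integral {a..b} (\<lambda>t. q t * integral {a..t} g)"
    by (rule integral_cong) (simp add: i2)
  finally show ?thesis .
qed

lemma abs_int_mult_cont:
  fixes G p :: "real \<Rightarrow> complex"
  assumes G: "G absolutely_integrable_on {a..b}" and p: "continuous_on {a..b} p"
  shows "(\<lambda>s. p s * G s) absolutely_integrable_on {a..b}"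
proof (rule absolutely_integrable_bounded_measurable_product[where h="(*)", OF bilinear_times _ _ _ G])
  show "p \<in> borel_measurable (lebesgue_on {a..b})"
    by (rule continuous_imp_measurable_on_sets_lebesgue[OF p]) auto
  show "bounded (p ` {a..b})"
    by (rule compact_imp_bounded[OF compact_continuous_image[OF p compact_Icc]])
qed auto

lemma ibp_weak:
  fixes G v p p' :: "real \<Rightarrow> complex"
  assumes ab: "a \<le> b" and G: "G absolutely_integrable_on {a..b}"
    and Gv: "\<And>y. y \<in> {a..b} \<Longrightarrow> (G has_integral (v y - v a)) {a..y}"
    and p: "\<And>t. t \<in> {a..b} \<Longrightarrow> (p has_vector_derivative p' t) (at t within {a..b})"
    and p': "continuous_on {a..b} p'"
  shows "integral {a..b} (\<lambda>s. G s * p s) = p b * v b - p a * v a - integral {a..b} (\<lambda>t. p' t * v t)"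
proof -
  have Gi: "G integrable_on {a..b}" using G set_lebesgue_integral_eq_integral(1) by blast
  have pc: "continuous_on {a..b} p"
    using p by (meson continuous_on_vector_derivative)
  have vG: "integral {a..t} G = v t - v a" if "t \<in> {a..b}" for t
    using Gv[OF that] by (rule integral_unique)
  have ic: "continuous_on {a..b} (\<lambda>t. integral {a..t} G)"
    by (rule indefinite_integral_continuous_1[OF Gi])
  have vc: "continuous_on {a..b} v"
  proof -
    have "continuous_on {a..b} (\<lambda>t. v a + integral {a..t} G)" by (intro continuous_intros ic)
    then show ?thesis by (rule continuous_on_eq) (simp add: vG)
  qed
  have ftc: "integral {s..b} p' = p b - p s" if "s \<in> {a..b}" for s
  proof -
    have "(p' has_integral (p b - p s)) {s..b}"
      using that
      by (intro fundamental_theorem_of_calculus)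
         (auto intro: has_vector_derivative_within_subset[OF p])
    then show ?thesis by (rule integral_unique)
  qed
  have i1: "(\<lambda>s. G s * p s) integrable_on {a..b}"
    using abs_int_mult_cont[OF G pc] set_lebesgue_integral_eq_integral(1) by (simp add: mult.commute)
  have i2: "(\<lambda>s. G s * p b) integrable_on {a..b}"
    using integrable_on_mult_left[OF Gi] .
  have "integral {a..b} (\<lambda>s. G s * p s) = integral {a..b} (\<lambda>s. G s * p b - G s * integral {s..b} p')"
    by (rule integral_cong) (simp add: ftc algebra_simps)
  also have "\<dots> = integral {a..b} (\<lambda>s. G s * p b) - integral {a..b} (\<lambda>s. G s * integral {s..b} p')"
  proof (rule integral_diff[OF i2])
    have "(\<lambda>s. G s * p b - G s * p s) integrable_on {a..b}" by (intro integrable_diff i1 i2)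
    then show "(\<lambda>s. G s * integral {s..b} p') integrable_on {a..b}"
      by (rule integrable_eq) (auto simp: ftc algebra_simps)
  qed
  also have "integral {a..b} (\<lambda>s. G s * integral {s..b} p') = integral {a..b} (\<lambda>t. p' t * integral {a..t} G)"
    by (rule ibp_core[OF ab G p'])
  also have "\<dots> = integral {a..b} (\<lambda>t. p' t * v t - v a * p' t)"
    by (rule integral_cong) (simp add: vG algebra_simps)
  also have "\<dots> = integral {a..b} (\<lambda>t. p' t * v t) - integral {a..b} (\<lambda>t. v a * p' t)"
    by (intro integral_diff integrable_continuous_interval continuous_intros p' vc)
  also have "integral {a..b} (\<lambda>t. v a * p' t) = v a * (p b - p a)"
    using ftc[of a] ab by simp
  also have "integral {a..b} (\<lambda>s. G s * p b) = (v b - v a) * p b"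
    using vG[of b] ab by simp
  finally show ?thesis by (simp add: algebra_simps)
qed

locale rs =
  fixes nu k lam em :: real and F w v :: "real \<Rightarrow> complex"
  assumes nu: "nu > 0"
    and wm1: "w (-1) = 0" and w1: "w 1 = 0"
    and wd: "\<And>y. y \<in> {-1..1} \<Longrightarrow> (w has_vector_derivative v y) (at y within {-1..1})"
    and vG: "\<And>y. y \<in> {-1..1} \<Longrightarrow> ((\<lambda>s. complex_of_real (k^2) * w s
               + (\<i> * complex_of_real (k * (s - lam)) * w s
                  - complex_of_real em * w s
                  - F s) / complex_of_real nu) has_integral (v y - v (-1))) {-1..y}"
    and Fm: "F \<in> borel_measurable (lebesgue_on {-1..1})"
    and F2: "integrable (lebesgue_on {-1..1}) (\<lambda>y. (cmod (F y))^2)"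
begin

definition G where "G = (\<lambda>s. complex_of_real (k^2) * w s
               + (\<i> * complex_of_real (k * (s - lam)) * w s
                  - complex_of_real em * w s
                  - F s) / complex_of_real nu)"

definition Pc where "Pc s = complex_of_real (nu * k^2 - em) + \<i> * complex_of_real (k * (s - lam))" for s

lemma wc: "continuous_on {-1..1} w"
  using wd by (meson continuous_on_vector_derivative)

lemma F2i: "(\<lambda>y. (cmod (F y))^2) integrable_on {-1..1}"
  using F2 by (intro integrable_on_lebesgue_on) auto

lemma Fabs: "F absolutely_integrable_on {-1..1}"
proof (rule measurable_bounded_by_integrable_imp_absolutely_integrable[OF Fm])
  show "(\<lambda>y. 1 + (cmod (F y))^2) integrable_on {-1..1}"
    by (intro integrable_add F2i integrable_const_ivl)
  show "cmod (F x) \<le> 1 + (cmod (F x))\<^sup>2" for x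
  proof -
    have "0 \<le> (cmod (F x) - 1/2)^2" by simp
    then show ?thesis by (simp add: power2_eq_square algebra_simps)
  qed
qed simp

lemma Gabs: "G absolutely_integrable_on {-1..1}"
proof -
  have c: "continuous_on {-1..1} (\<lambda>s. complex_of_real (k^2) * w s
               + (\<i> * complex_of_real (k * (s - lam)) * w s - complex_of_real em * w s) / complex_of_real nu)"
    by (intro continuous_intros wc) (use nu in auto)
  have "(\<lambda>s. (complex_of_real (k^2) * w s
               + (\<i> * complex_of_real (k * (s - lam)) * w s - complex_of_real em * w s) / complex_of_real nu)
         - F s / complex_of_real nu) absolutely_integrable_on {-1..1}"
    by (intro set_integral_diff(1) absolutely_integrable_continuous_real c set_integrable_divide Fabs)
  moreover have "G = (\<lambda>s. (complex_of_real (k^2) * w s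
               + (\<i> * complex_of_real (k * (s - lam)) * w s - complex_of_real em * w s) / complex_of_real nu)
         - F s / complex_of_real nu)"
    unfolding G_def by (auto simp: fun_eq_iff diff_divide_distrib)
  ultimately show ?thesis by simp
qed

lemma vG': "y \<in> {-1..1} \<Longrightarrow> (G has_integral (v y - v (-1))) {-1..y}"
  unfolding G_def by (rule vG)

lemma vc: "continuous_on {-1..1} v"
proof -
  have Gi: "G integrable_on {-1..1}" using Gabs set_lebesgue_integral_eq_integral(1) by blast
  have ic: "continuous_on {-1..1} (\<lambda>t. integral {-1..t} G)"
    by (rule indefinite_integral_continuous_1[OF Gi])
  have "continuous_on {-1..1} (\<lambda>t. v (-1) + integral {-1..t} G)" by (intro continuous_intros ic)
  moreover have "v (-1) + integral {-1..t} G = v t" if "t \<in> {-1..1}" for t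
    using integral_unique[OF vG'[OF that]] by simp
  ultimately show ?thesis by (rule continuous_on_eq)
qed

lemma F_eq: "F s = Pc s * w s - complex_of_real nu * G s"
  using nu unfolding G_def Pc_def by (simp add: field_simps)

lemma weak:
  fixes p p' :: "real \<Rightarrow> complex"
  assumes p: "\<And>t. t \<in> {-1..1} \<Longrightarrow> (p has_vector_derivative p' t) (at t within {-1..1})"
    and p': "continuous_on {-1..1} p'" and pm1: "p (-1) = 0" and p1: "p 1 = 0"
  shows "integral {-1..1} (\<lambda>s. F s * p s) = integral {-1..1} (\<lambda>s. Pc s * w s * p s) + nu * integral {-1..1} (\<lambda>s. v s * p' s)"
proof -
  have pc: "continuous_on {-1..1} p"
    using p by (meson continuous_on_vector_derivative)
  have ib: "integral {-1..1} (\<lambda>s. G s * p s) = - integral {-1..1} (\<lambda>s. p' s * v s)"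
    using ibp_weak[of "-1" 1 G v p p'] Gabs vG' p p' pm1 p1 by simp
  have i1: "(\<lambda>s. Pc s * w s * p s) integrable_on {-1..1}"
    unfolding Pc_def by (intro integrable_continuous_interval continuous_intros wc pc)
  have i2: "(\<lambda>s. complex_of_real nu * (G s * p s)) integrable_on {-1..1}"
    using abs_int_mult_cont[OF Gabs pc] set_lebesgue_integral_eq_integral(1)
    by (intro integrable_on_mult_right) (simp add: mult.commute)
  have "integral {-1..1} (\<lambda>s. F s * p s) = integral {-1..1} (\<lambda>s. Pc s * w s * p s - complex_of_real nu * (G s * p s))"
    by (rule integral_cong) (simp add: F_eq algebra_simps)
  also have "\<dots> = integral {-1..1} (\<lambda>s. Pc s * w s * p s) - complex_of_real nu * integral {-1..1} (\<lambda>s. G s * p s)"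
    using i1 i2 by (simp add: integral_diff)
  also have "\<dots> = integral {-1..1} (\<lambda>s. Pc s * w s * p s) + nu * integral {-1..1} (\<lambda>s. v s * p' s)"
    using ib by (simp add: mult.commute[of "v _"])
  finally show ?thesis .
qed

end

lemma opt_amgm:
  fixes x A B :: real
  assumes A: "A \<ge> 0" and B: "B \<ge> 0" and h: "\<And>s. s > 0 \<Longrightarrow> x \<le> (s * A + B / s) / 2"
  shows "x \<le> sqrt A * sqrt B"
proof (cases "A > 0 \<and> B > 0")
  case True
  define s where "s = sqrt B / sqrt A"
  have s: "s > 0" using True by (simp add: s_def)
  have "s * A = sqrt A * sqrt B"
    using True unfolding s_def by (simp add: field_simps)
  moreover have "B / s = sqrt A * sqrt B"
    using True unfolding s_def by (simp add: field_simps)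
  ultimately show ?thesis using h[OF s] by simp
next
  case False
  then have AB: "A = 0 \<or> B = 0" using A B by linarith
  have "x \<le> 0"
  proof (rule ccontr)
    assume x: "\<not> x \<le> 0"
    show False
    proof (cases "A = 0")
      case True
      define s where "s = (B + 1) / x"
      have s: "s > 0" using x B by (simp add: s_def)
      have Bx: "0 \<le> B * x" using x B by simp
      have "x \<le> B / s / 2" using h[OF s] True by simp
      also have "B / s / 2 = B * x / (2 * (B + 1))" using x B by (simp add: s_def field_simps)
      also have "\<dots> < x"
      proof -
        have e: "x * (2 * (B + 1)) = B * x + (B * x + 2 * x)" by (simp add: algebra_simps)
        have "B * x < x * (2 * (B + 1))" unfolding e using x Bx by linarith
        then show ?thesis using B by (simp add: divide_less_eq)
      qed
      finally show False by simp
    next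
      case False
      then have B0: "B = 0" using AB by simp
      define s where "s = x / (A + 1)"
      have s: "s > 0" using x A by (simp add: s_def)
      have Ax: "0 \<le> A * x" using x A by simp
      have "x \<le> s * A / 2" using h[OF s] B0 by simp
      also have "s * A / 2 = x * A / (2 * (A + 1))" using x A by (simp add: s_def field_simps)
      also have "\<dots> < x"
      proof -
        have e: "x * (2 * (A + 1)) = A * x + (A * x + 2 * x)" by (simp add: algebra_simps)
        have "x * A < x * (2 * (A + 1))" unfolding e using x Ax by (simp add: mult.commute)
        then show ?thesis using A by (simp add: divide_less_eq)
      qed
      finally show False by simp
    qed
  qed
  then show ?thesis using A B by (meson order_trans real_sqrt_ge_zero zero_le_mult_iff)
qed

lemma CS_int:
  fixes f g :: "real \<Rightarrow> real"
  assumes fg: "(\<lambda>x. f x * g x) integrable_on S" and f2: "(\<lambda>x. (f x)^2) integrable_on S"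
    and g2: "(\<lambda>x. (g x)^2) integrable_on S"
  shows "integral S (\<lambda>x. f x * g x) \<le> sqrt (integral S (\<lambda>x. (f x)^2)) * sqrt (integral S (\<lambda>x. (g x)^2))"
proof (rule opt_amgm)
  show "0 \<le> integral S (\<lambda>x. (f x)^2)" by (rule integral_nonneg[OF f2]) simp
  show "0 \<le> integral S (\<lambda>x. (g x)^2)" by (rule integral_nonneg[OF g2]) simp
  fix s :: real assume s: "s > 0"
  have pw: "f x * g x \<le> (s * (f x)^2 + (g x)^2 / s) / 2" for x
  proof -
    have "0 \<le> (s * f x - g x)^2 / s" using s by simp
    then show ?thesis using s by (simp add: field_simps power2_eq_square)
  qed
  define c2 where "c2 = 1 / (2 * s)"
  have eq: "(s * (f x)^2 + (g x)^2 / s) / 2 = (s/2) * (f x)^2 + c2 * (g x)^2" for x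
    using s by (simp add: field_simps c2_def)
  have i1: "(\<lambda>x. (s/2) * (f x)^2) integrable_on S" by (rule integrable_on_mult_right[OF f2])
  have i2: "(\<lambda>x. c2 * (g x)^2) integrable_on S" by (rule integrable_on_mult_right[OF g2])
  have "integral S (\<lambda>x. f x * g x) \<le> integral S (\<lambda>x. (s/2) * (f x)^2 + c2 * (g x)^2)"
    by (rule integral_le[OF fg integrable_add[OF i1 i2]]) (use pw eq in simp)
  also have "\<dots> = (s/2) * integral S (\<lambda>x. (f x)^2) + c2 * integral S (\<lambda>x. (g x)^2)"
    using i1 i2 f2 g2 by (simp add: integral_add)
  also have "\<dots> = (s * integral S (\<lambda>x. (f x)^2) + integral S (\<lambda>x. (g x)^2) / s) / 2"
    using s by (simp add: field_simps c2_def)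
  finally show "integral S (\<lambda>x. f x * g x) \<le> (s * integral S (\<lambda>x. (f x)^2) + integral S (\<lambda>x. (g x)^2) / s) / 2" .
qed

lemma integral_Re':
  fixes f :: "'a::euclidean_space \<Rightarrow> complex"
  assumes "f integrable_on S"
  shows "integral S (\<lambda>x. Re (f x)) = Re (integral S f)"
  using has_integral_Re[OF integrable_integral[OF assms]] by (rule integral_unique)

lemma integral_Im':
  fixes f :: "'a::euclidean_space \<Rightarrow> complex"
  assumes "f integrable_on S"
  shows "integral S (\<lambda>x. Im (f x)) = Im (integral S f)"
  using has_integral_Im[OF integrable_integral[OF assms]] by (rule integral_unique)

lemma Re_integrable:
  fixes f :: "'a::euclidean_space \<Rightarrow> complex"
  shows "f integrable_on S \<Longrightarrow> (\<lambda>x. Re (f x)) integrable_on S"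
  using has_integral_Re integrable_on_def by blast

lemma Im_integrable:
  fixes f :: "'a::euclidean_space \<Rightarrow> complex"
  shows "f integrable_on S \<Longrightarrow> (\<lambda>x. Im (f x)) integrable_on S"
  using has_integral_Im integrable_on_def by blast

context rs begin

definition "N2 = integral {-1..1} (\<lambda>s. (cmod (w s))^2)"
definition "D2 = integral {-1..1} (\<lambda>s. (cmod (v s))^2)"
definition "M2 = integral {-1..1} (\<lambda>s. ((s - lam) * cmod (w s))^2)"
definition "P2 = integral {-1..1} (\<lambda>s. (cmod (F s))^2)"
definition "SS = integral {-1..1} (\<lambda>s. cmod (v s) * cmod (w s))"

lemma Re_mof: "Re (z * complex_of_real r) = Re z * r" by simp
lemma Im_mof: "Im (z * complex_of_real r) = Im z * r" by simp
lemma Re_Pc: "Re (Pc s) = nu * k^2 - em" by (simp add: Pc_def)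
lemma Im_Pc: "Im (Pc s) = k * (s - lam)" by (simp add: Pc_def)

lemma mcnj: "z * cnj z = complex_of_real ((cmod z)^2)"
  by (rule complex_norm_square[symmetric])

lemma cont_int:
  fixes f :: "real \<Rightarrow> 'b::euclidean_space"
  shows "continuous_on {-1..1} f \<Longrightarrow> f integrable_on {-1..1}"
  by (simp add: integrable_continuous_real)

lemma Fp:
  fixes p :: "real \<Rightarrow> complex"
  assumes p: "continuous_on {-1..1} p"
  shows "(\<lambda>s. F s * p s) integrable_on {-1..1}"
    and "norm (integral {-1..1} (\<lambda>s. F s * p s)) \<le> sqrt P2 * sqrt (integral {-1..1} (\<lambda>s. (cmod (p s))^2))"
proof -
  have a: "(\<lambda>s. F s * p s) absolutely_integrable_on {-1..1}"
    using abs_int_mult_cont[OF Fabs p] by (simp add: mult.commute)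
  then show i: "(\<lambda>s. F s * p s) integrable_on {-1..1}"
    using set_lebesgue_integral_eq_integral(1) by blast
  have n: "(\<lambda>s. cmod (F s) * cmod (p s)) integrable_on {-1..1}"
    using a unfolding absolutely_integrable_on_def by (simp add: norm_mult)
  have "norm (integral {-1..1} (\<lambda>s. F s * p s)) \<le> integral {-1..1} (\<lambda>s. cmod (F s) * cmod (p s))"
    by (rule integral_norm_bound_integral[OF i n]) (simp add: norm_mult)
  also have "\<dots> \<le> sqrt P2 * sqrt (integral {-1..1} (\<lambda>s. (cmod (p s))^2))"
    unfolding P2_def
    by (rule CS_int[OF n F2i]) (intro cont_int continuous_intros p)
  finally show "norm (integral {-1..1} (\<lambda>s. F s * p s)) \<le> sqrt P2 * sqrt (integral {-1..1} (\<lambda>s. (cmod (p s))^2))" .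
qed

lemma SS_bound: "SS \<le> sqrt D2 * sqrt N2"
  unfolding SS_def D2_def N2_def
  by (rule CS_int) (intro cont_int continuous_intros vc wc)+

lemma SS_nonneg: "0 \<le> SS"
  unfolding SS_def by (rule integral_nonneg) (intro cont_int continuous_intros vc wc, simp)

lemma estA: "(nu * k^2 - em) * N2 + nu * D2 \<le> sqrt P2 * sqrt N2"
proof -
  have pd: "((\<lambda>s. cnj (w s)) has_vector_derivative cnj (v t)) (at t within {-1..1})" if "t \<in> {-1..1}" for t
    by (rule has_vector_derivative_cnj[OF wd[OF that]])
  have W: "integral {-1..1} (\<lambda>s. F s * cnj (w s)) = integral {-1..1} (\<lambda>s. Pc s * w s * cnj (w s)) + nu * integral {-1..1} (\<lambda>s. v s * cnj (v s))"
    by (rule weak[OF pd]) (auto intro: continuous_intros vc simp: wm1 w1)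
  have i1: "(\<lambda>s. Pc s * w s * cnj (w s)) integrable_on {-1..1}"
    unfolding Pc_def by (intro cont_int continuous_intros wc)
  have i2: "(\<lambda>s. v s * cnj (v s)) integrable_on {-1..1}"
    by (intro cont_int continuous_intros vc)
  have r1: "Re (integral {-1..1} (\<lambda>s. Pc s * w s * cnj (w s))) = (nu * k^2 - em) * N2"
  proof -
    have "Re (integral {-1..1} (\<lambda>s. Pc s * w s * cnj (w s))) = integral {-1..1} (\<lambda>s. Re (Pc s * w s * cnj (w s)))"
      by (rule integral_Re'[OF i1, symmetric])
    also have "\<dots> = integral {-1..1} (\<lambda>s. (nu * k^2 - em) * (cmod (w s))^2)"
    proof (rule integral_cong)
      fix s
      have eq: "Pc s * w s * cnj (w s) = Pc s * complex_of_real ((cmod (w s))^2)"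
        by (simp only: mult.assoc mcnj)
      show "Re (Pc s * w s * cnj (w s)) = (nu * k^2 - em) * (cmod (w s))^2"
        unfolding eq Re_mof Re_Pc ..
    qed
    also have "\<dots> = (nu * k^2 - em) * N2" unfolding N2_def by simp
    finally show ?thesis .
  qed
  have r2: "Re (integral {-1..1} (\<lambda>s. v s * cnj (v s))) = D2"
  proof -
    have "Re (integral {-1..1} (\<lambda>s. v s * cnj (v s))) = integral {-1..1} (\<lambda>s. Re (v s * cnj (v s)))"
      by (rule integral_Re'[OF i2, symmetric])
    also have "\<dots> = D2" unfolding D2_def
      by (rule integral_cong) (simp only: mcnj Re_complex_of_real)
    finally show ?thesis .
  qed
  have "(nu * k^2 - em) * N2 + nu * D2 = Re (integral {-1..1} (\<lambda>s. F s * cnj (w s)))"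
    using W r1 r2 by simp
  also have "\<dots> \<le> norm (integral {-1..1} (\<lambda>s. F s * cnj (w s)))" by (rule complex_Re_le_cmod)
  also have "\<dots> \<le> sqrt P2 * sqrt N2"
    using Fp(2)[of "\<lambda>s. cnj (w s)"] unfolding N2_def by (simp add: continuous_intros wc)
  finally show ?thesis .
qed

end

context rs begin

lemma M2_nonneg: "0 \<le> M2"
  unfolding M2_def by (rule integral_nonneg) (intro cont_int continuous_intros wc, simp)
lemma N2_nonneg: "0 \<le> N2"
  unfolding N2_def by (rule integral_nonneg) (intro cont_int continuous_intros wc, simp)
lemma D2_nonneg: "0 \<le> D2"
  unfolding D2_def by (rule integral_nonneg) (intro cont_int continuous_intros vc, simp)
lemma P2_nonneg: "0 \<le> P2"
  unfolding P2_def by (rule integral_nonneg[OF F2i]) simp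

lemma estB: "\<bar>k\<bar> * M2 \<le> sqrt P2 * sqrt M2 + nu * SS"
proof -
  define p where "p s = complex_of_real (s - lam) * cnj (w s)" for s
  define p' where "p' s = complex_of_real (s - lam) * cnj (v s) + complex_of_real 1 * cnj (w s)" for s
  have pd: "(p has_vector_derivative p' t) (at t within {-1..1})" if "t \<in> {-1..1}" for t
  proof -
    have d1: "((\<lambda>s. s - lam) has_field_derivative 1) (at t within {-1..1})"
      by (intro derivative_eq_intros) auto
    show ?thesis unfolding p_def p'_def
      by (rule has_vector_derivative_mult[OF has_vector_derivative_of_real[OF d1] has_vector_derivative_cnj[OF wd[OF that]]])
  qed
  have pc: "continuous_on {-1..1} p" unfolding p_def by (intro continuous_intros wc)
  have W: "integral {-1..1} (\<lambda>s. F s * p s) = integral {-1..1} (\<lambda>s. Pc s * w s * p s) + nu * integral {-1..1} (\<lambda>s. v s * p' s)"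
    by (rule weak[OF pd]) (auto intro!: continuous_intros vc wc simp: wm1 w1 p_def p'_def)
  have i1: "(\<lambda>s. Pc s * w s * p s) integrable_on {-1..1}"
    unfolding Pc_def p_def by (intro cont_int continuous_intros wc)
  have i2: "(\<lambda>s. v s * p' s) integrable_on {-1..1}"
    unfolding p'_def by (intro cont_int continuous_intros vc wc)
  have r1: "Im (integral {-1..1} (\<lambda>s. Pc s * w s * p s)) = k * M2"
  proof -
    have "Im (integral {-1..1} (\<lambda>s. Pc s * w s * p s)) = integral {-1..1} (\<lambda>s. Im (Pc s * w s * p s))"
      by (rule integral_Im'[OF i1, symmetric])
    also have "\<dots> = integral {-1..1} (\<lambda>s. k * ((s - lam) * cmod (w s))^2)"
    proof (rule integral_cong)
      fix s
      have eq: "Pc s * w s * p s = Pc s * complex_of_real ((s - lam) * (cmod (w s))^2)"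
      proof -
        have "Pc s * w s * p s = Pc s * complex_of_real (s - lam) * (w s * cnj (w s))"
          unfolding p_def by (simp add: algebra_simps)
        also have "\<dots> = Pc s * complex_of_real ((s - lam) * (cmod (w s))^2)"
          by (simp only: mcnj mult.assoc of_real_mult)
        finally show ?thesis .
      qed
      show "Im (Pc s * w s * p s) = k * ((s - lam) * cmod (w s))^2"
        unfolding eq Im_mof Im_Pc by (simp add: power2_eq_square algebra_simps)
    qed
    also have "\<dots> = k * M2" unfolding M2_def by simp
    finally show ?thesis .
  qed
  define J where "J = integral {-1..1} (\<lambda>s. Im (v s * cnj (w s)))"
  have r2: "Im (integral {-1..1} (\<lambda>s. v s * p' s)) = J"
  proof -
    have "Im (integral {-1..1} (\<lambda>s. v s * p' s)) = integral {-1..1} (\<lambda>s. Im (v s * p' s))"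
      by (rule integral_Im'[OF i2, symmetric])
    also have "\<dots> = J" unfolding J_def
    proof (rule integral_cong)
      fix s
      have "v s * p' s = complex_of_real (s - lam) * (v s * cnj (v s)) + v s * cnj (w s)"
        unfolding p'_def by (simp add: algebra_simps)
      also have "\<dots> = complex_of_real ((s - lam) * (cmod (v s))^2) + v s * cnj (w s)"
        by (simp only: mcnj of_real_mult)
      finally show "Im (v s * p' s) = Im (v s * cnj (w s))" by simp
    qed
    finally show ?thesis .
  qed
  have Jb: "\<bar>J\<bar> \<le> SS"
  proof -
    have pw: "norm (Im (v s * cnj (w s))) \<le> cmod (v s) * cmod (w s)" for s
    proof -
      have h: "\<bar>Im (v s * cnj (w s))\<bar> \<le> cmod (v s * cnj (w s))" by (rule abs_Im_le_cmod)
      then show ?thesis by (simp only: real_norm_def norm_mult complex_mod_cnj)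
    qed
    have "norm J \<le> SS" unfolding J_def SS_def
      by (rule integral_norm_bound_integral[OF _ _ pw])
         (auto intro!: cont_int continuous_intros vc wc)
    then show ?thesis by simp
  qed
  have nb: "norm (integral {-1..1} (\<lambda>s. F s * p s)) \<le> sqrt P2 * sqrt M2"
  proof -
    have "integral {-1..1} (\<lambda>s. (cmod (p s))^2) = M2" unfolding M2_def p_def
      by (rule integral_cong) (simp only: norm_mult norm_of_real complex_mod_cnj power_mult_distrib power2_abs)
    then show ?thesis using Fp(2)[OF pc] by simp
  qed
  have "Im (integral {-1..1} (\<lambda>s. F s * p s)) = k * M2 + nu * J"
    using W r1 r2 by simp
  then have eq: "k * M2 = Im (integral {-1..1} (\<lambda>s. F s * p s)) - nu * J" by simp
  have t1: "\<bar>k * M2\<bar> \<le> \<bar>Im (integral {-1..1} (\<lambda>s. F s * p s))\<bar> + \<bar>nu * J\<bar>"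
    unfolding eq by (rule abs_triangle_ineq4)
  have t2: "\<bar>nu * J\<bar> \<le> nu * SS" using nu Jb by (simp add: abs_mult)
  have t3: "\<bar>Im (integral {-1..1} (\<lambda>s. F s * p s))\<bar> \<le> sqrt P2 * sqrt M2"
    using abs_Im_le_cmod[of "integral {-1..1} (\<lambda>s. F s * p s)"] nb by linarith
  have "\<bar>k * M2\<bar> \<le> sqrt P2 * sqrt M2 + nu * SS" using t1 t2 t3 by linarith
  then show ?thesis using M2_nonneg by (simp add: abs_mult)
qed

lemma sup_bound:
  assumes y: "y \<in> {-1..1}"
  shows "(cmod (w y))^2 \<le> 2 * SS"
proof -
  define q where "q s = w s * cnj (w s)" for s
  define q' where "q' s = w s * cnj (v s) + v s * cnj (w s)" for s
  have qd: "(q has_vector_derivative q' t) (at t within {-1..y})" if "t \<in> {-1..y}" for t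
  proof -
    have t: "t \<in> {-1..1}" using that y by auto
    have "(q has_vector_derivative q' t) (at t within {-1..1})"
      unfolding q_def q'_def
      by (rule has_vector_derivative_mult[OF wd[OF t] has_vector_derivative_cnj[OF wd[OF t]]])
    then show ?thesis by (rule has_vector_derivative_within_subset) (use y in auto)
  qed
  have "(q' has_integral (q y - q (-1))) {-1..y}"
    by (rule fundamental_theorem_of_calculus) (use y qd in auto)
  then have I: "integral {-1..y} q' = complex_of_real ((cmod (w y))^2)"
    unfolding q_def using wm1 by (simp add: integral_unique mcnj)
  have sub: "{-1..y} \<subseteq> {-1..1}" using y by auto
  have c: "continuous_on {-1..y} (\<lambda>s. 2 * (cmod (v s) * cmod (w s)))"
    by (intro continuous_intros continuous_on_subset[OF vc sub] continuous_on_subset[OF wc sub])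
  have "(cmod (w y))^2 = norm (integral {-1..y} q')" unfolding I norm_of_real by simp
  also have "\<dots> \<le> integral {-1..y} (\<lambda>s. 2 * (cmod (v s) * cmod (w s)))"
  proof (rule integral_norm_bound_integral)
    show "q' integrable_on {-1..y}" unfolding q'_def
      by (intro integrable_continuous_real continuous_intros continuous_on_subset[OF vc sub] continuous_on_subset[OF wc sub])
    show "(\<lambda>s. 2 * (cmod (v s) * cmod (w s))) integrable_on {-1..y}"
      by (rule integrable_continuous_real[OF c])
    fix s show "norm (q' s) \<le> 2 * (cmod (v s) * cmod (w s))"
      unfolding q'_def by (rule order_trans[OF norm_triangle_ineq]) (simp add: norm_mult)
  qed
  also have "\<dots> \<le> integral {-1..1} (\<lambda>s. 2 * (cmod (v s) * cmod (w s)))"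
    by (rule integral_subset_le[OF sub integrable_continuous_real[OF c]])
       (auto intro!: cont_int continuous_intros vc wc)
  also have "\<dots> = 2 * SS" unfolding SS_def by simp
  finally show ?thesis .
qed

end

lemma ker_int:
  fixes d lam :: real
  assumes d: "d > 0"
  shows "((\<lambda>s. d^2 / (d^2 + (s - lam)^2)) has_integral (d * arctan ((1 - lam) / d) - d * arctan ((-1 - lam) / d))) {-1..1}"
proof -
  have "((\<lambda>s. d * arctan ((s - lam) / d)) has_vector_derivative d^2 / (d^2 + (t - lam)^2)) (at t within {-1..1})" for t
  proof -
    have "((\<lambda>s. d * arctan ((s - lam) / d)) has_real_derivative d * (inverse (1 + ((t - lam) / d)^2) * (1 / d))) (at t within {-1..1})"
      by (intro derivative_eq_intros DERIV_arctan[THEN DERIV_chain2]) (use d in auto)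
    moreover have "d * (inverse (1 + ((t - lam) / d)^2) * (1 / d)) = d^2 / (d^2 + (t - lam)^2)"
      using d by (simp add: field_simps power2_eq_square)
    ultimately show ?thesis by (simp add: has_real_derivative_iff_has_vector_derivative)
  qed
  then show ?thesis
    using fundamental_theorem_of_calculus[of "-1" 1 "\<lambda>s. d * arctan ((s - lam) / d)" "\<lambda>t. d^2 / (d^2 + (t - lam)^2)"]
    by simp
qed

lemma ker_bound:
  fixes d lam :: real
  assumes d: "d > 0"
  shows "(\<lambda>s. d^2 / (d^2 + (s - lam)^2)) integrable_on {-1..1}"
    and "integral {-1..1} (\<lambda>s. d^2 / (d^2 + (s - lam)^2)) \<le> pi * d"
proof -
  show "(\<lambda>s. d^2 / (d^2 + (s - lam)^2)) integrable_on {-1..1}"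
    using ker_int[OF d] by blast
  have "d * arctan ((1 - lam) / d) - d * arctan ((-1 - lam) / d) = d * (arctan ((1 - lam) / d) - arctan ((-1 - lam) / d))"
    by (simp add: algebra_simps)
  also have "\<dots> \<le> d * pi"
    using arctan_bounded[of "(1 - lam) / d"] arctan_bounded[of "(-1 - lam) / d"] d
    by (intro mult_left_mono) auto
  finally show "integral {-1..1} (\<lambda>s. d^2 / (d^2 + (s - lam)^2)) \<le> pi * d"
    using integral_unique[OF ker_int[OF d]] by (simp add: mult.commute)
qed

lemma ker2_bound:
  fixes d lam :: real
  assumes d: "d > 0"
  shows "(\<lambda>s. 1 / (d^2 + (s - lam)^2)) integrable_on {-1..1}"
    and "integral {-1..1} (\<lambda>s. 1 / (d^2 + (s - lam)^2)) \<le> pi / d"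
proof -
  have eq: "(\<lambda>s. 1 / (d^2 + (s - lam)^2)) = (\<lambda>s. (1 / d^2) * (d^2 / (d^2 + (s - lam)^2)))"
    using d by (auto simp: fun_eq_iff)
  show "(\<lambda>s. 1 / (d^2 + (s - lam)^2)) integrable_on {-1..1}"
    unfolding eq by (rule integrable_on_mult_right[OF ker_bound(1)[OF d]])
  have "integral {-1..1} (\<lambda>s. 1 / (d^2 + (s - lam)^2)) = (1 / d^2) * integral {-1..1} (\<lambda>s. d^2 / (d^2 + (s - lam)^2))"
    unfolding eq by (rule integral_mult_right)
  also have "\<dots> \<le> (1 / d^2) * (pi * d)"
    by (rule mult_left_mono[OF ker_bound(2)[OF d]]) simp
  also have "\<dots> = pi / d" using d by (simp add: power2_eq_square)
  finally show "integral {-1..1} (\<lambda>s. 1 / (d^2 + (s - lam)^2)) \<le> pi / d" .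
qed

lemma cancel_aux: "(a::real) \<noteq> 0 \<Longrightarrow> a * c * (1 / a) = c" by simp

context rs begin

lemma split_bound:
  assumes d: "d > 0"
  shows "N2 \<le> 2 * SS * (pi * d) + M2 / d^2"
proof -
  have pw: "(cmod (w s))^2 \<le> 2 * SS * (d^2 / (d^2 + (s - lam)^2)) + ((s - lam) * cmod (w s))^2 / d^2"
    if s: "s \<in> {-1..1}" for s
  proof -
    define a where "a = (cmod (w s))^2"
    define t where "t = (s - lam)^2"
    have a: "0 \<le> a" "a \<le> 2 * SS" using sup_bound[OF s] by (auto simp: a_def)
    have t: "0 \<le> t" by (simp add: t_def)
    have dd: "d^2 > 0" using d by simp
    have dt: "d^2 + t > 0" using dd t by linarith
    have dt': "d^2 + t \<noteq> 0" using dt by linarith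
    have "a * (d^2 / (d^2 + t)) + a * (t / (d^2 + t)) = a * ((d^2 + t) / (d^2 + t))"
      by (simp only: add_divide_distrib distrib_left)
    also have "\<dots> = a" using dt' by simp
    finally have "a = a * (d^2 / (d^2 + t)) + a * (t / (d^2 + t))" by simp
    also have "a * (d^2 / (d^2 + t)) \<le> 2 * SS * (d^2 / (d^2 + t))"
      by (rule mult_right_mono) (use a dd t in auto)
    also have "a * (t / (d^2 + t)) \<le> a * (t / d^2)"
      by (rule mult_left_mono[OF frac_le]) (use a dd t in auto)
    finally have "a \<le> 2 * SS * (d^2 / (d^2 + t)) + a * t / d^2" by simp
    then show ?thesis unfolding a_def t_def by (simp add: power_mult_distrib mult.commute)
  qed
  have i1: "(\<lambda>s. 2 * SS * (d^2 / (d^2 + (s - lam)^2))) integrable_on {-1..1}"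
    by (rule integrable_on_mult_right[OF ker_bound(1)[OF d]])
  have i2: "(\<lambda>s. ((s - lam) * cmod (w s))^2 / d^2) integrable_on {-1..1}"
    by (intro cont_int continuous_intros wc) (use d in auto)
  have "N2 \<le> integral {-1..1} (\<lambda>s. 2 * SS * (d^2 / (d^2 + (s - lam)^2)) + ((s - lam) * cmod (w s))^2 / d^2)"
    unfolding N2_def
    by (rule integral_le[OF cont_int integrable_add[OF i1 i2] pw]) (intro continuous_intros wc)
  also have "\<dots> = integral {-1..1} (\<lambda>s. 2 * SS * (d^2 / (d^2 + (s - lam)^2))) + integral {-1..1} (\<lambda>s. ((s - lam) * cmod (w s))^2 / d^2)"
    by (rule integral_add[OF i1 i2])
  also have "\<dots> = 2 * SS * integral {-1..1} (\<lambda>s. d^2 / (d^2 + (s - lam)^2)) + M2 / d^2"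
    unfolding M2_def by (simp only: integral_mult_right integral_divide)
  also have "\<dots> \<le> 2 * SS * (pi * d) + M2 / d^2"
    using ker_bound(2)[OF d, of lam] SS_nonneg by (simp add: mult_left_mono)
  finally show ?thesis .
qed

lemma L1_bound:
  assumes d: "d > 0"
  shows "integral {-1..1} (\<lambda>s. cmod (w s)) \<le> sqrt (d^2 * N2 + M2) * sqrt (pi / d)"
proof -
  define f where "f s = sqrt (d^2 + (s - lam)^2) * cmod (w s)" for s
  define g where "g s = 1 / sqrt (d^2 + (s - lam)^2)" for s
  have pos: "d^2 + (s - lam)^2 > 0" for s using d by (simp add: add_pos_nonneg)
  have fg: "f s * g s = cmod (w s)" for s
  proof -
    have "sqrt (d^2 + (s - lam)^2) \<noteq> 0" using real_sqrt_gt_zero[OF pos[of s]] by linarith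
    then show ?thesis unfolding f_def g_def by (rule cancel_aux)
  qed
  have f2: "(f s)^2 = d^2 * (cmod (w s))^2 + ((s - lam) * cmod (w s))^2" for s
  proof -
    have "(f s)^2 = (d^2 + (s - lam)^2) * (cmod (w s))^2"
      unfolding f_def power_mult_distrib real_sqrt_pow2[OF less_imp_le[OF pos]] ..
    also have "\<dots> = d^2 * (cmod (w s))^2 + ((s - lam) * cmod (w s))^2"
      by (simp only: distrib_right power_mult_distrib)
    finally show ?thesis .
  qed
  have g2: "(g s)^2 = 1 / (d^2 + (s - lam)^2)" for s
    using pos[of s] unfolding g_def by (simp add: power_divide)
  have "integral {-1..1} (\<lambda>s. cmod (w s)) = integral {-1..1} (\<lambda>s. f s * g s)" by (simp add: fg)
  also have "\<dots> \<le> sqrt (integral {-1..1} (\<lambda>s. (f s)^2)) * sqrt (integral {-1..1} (\<lambda>s. (g s)^2))"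
  proof (rule CS_int)
    show "(\<lambda>s. f s * g s) integrable_on {-1..1}" unfolding fg by (intro cont_int continuous_intros wc)
    show "(\<lambda>s. (f s)^2) integrable_on {-1..1}" unfolding f2 by (intro cont_int continuous_intros wc)
    show "(\<lambda>s. (g s)^2) integrable_on {-1..1}" unfolding g2 by (rule ker2_bound(1)[OF d])
  qed
  also have "integral {-1..1} (\<lambda>s. (f s)^2) = d^2 * N2 + M2"
    unfolding f2 N2_def M2_def
    by (subst integral_add) (auto intro!: cont_int continuous_intros wc)
  also have "sqrt (integral {-1..1} (\<lambda>s. (g s)^2)) \<le> sqrt (pi / d)"
    unfolding g2 using ker2_bound(2)[OF d] by simp
  finally show ?thesis
    using M2_nonneg N2_nonneg by (simp add: mult_left_mono)
qed

lemma L1t_bound: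
  shows "integral {-1..1} (\<lambda>s. \<bar>s - lam\<bar> * cmod (w s)) \<le> sqrt M2 * sqrt 2"
proof -
  define f where "f s = \<bar>s - lam\<bar> * cmod (w s)" for s
  define g :: "real \<Rightarrow> real" where "g s = 1" for s
  have h: "integral {-1..1} (\<lambda>x. f x * g x) \<le> sqrt (integral {-1..1} (\<lambda>x. (f x)^2)) * sqrt (integral {-1..1} (\<lambda>x. (g x)^2))"
  proof (rule CS_int)
    show "(\<lambda>x. f x * g x) integrable_on {-1..1}" unfolding f_def g_def by (intro cont_int continuous_intros wc)
    show "(\<lambda>x. (f x)^2) integrable_on {-1..1}" unfolding f_def g_def by (intro cont_int continuous_intros wc)
    show "(\<lambda>x. (g x)^2) integrable_on {-1..1}" unfolding f_def g_def by (intro cont_int continuous_intros wc)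
  qed
  have "integral {-1..1} (\<lambda>x. (f x)^2) = M2"
    unfolding M2_def f_def by (simp add: power_mult_distrib)
  then show ?thesis using h unfolding f_def g_def by simp
qed

end

lemma alg1:
  fixes K d e P N D M S :: real
  assumes K: "K > 0" and d: "0 < d" "d \<le> 1" and e: "0 \<le> e" "e \<le> 1/400"
    and P: "P \<ge> 0" and N: "N \<ge> 0" and D: "D \<ge> 0" and M: "M \<ge> 0" and S: "S \<ge> 0"
    and A: "K * d^3 * D^2 \<le> P * N + e * (K * d) * N^2"
    and B: "K * M^2 \<le> P * M + K * d^3 * S"
    and SD: "S \<le> D * N"
    and C: "N^2 \<le> 2 * pi * d * S + M^2 / d^2"
  shows "K * d * N \<le> 400 * P \<and> K * M \<le> 160 * P"
proof -
  have B1: "K^2 * M^2 \<le> P^2 + 2 * K^2 * d^3 * S"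
  proof -
    have "K^2 * M^2 \<le> K * P * M + K^2 * d^3 * S"
      using mult_left_mono[OF B, of K] K by (simp add: algebra_simps power2_eq_square power3_eq_cube)
    moreover have "2 * (K * P * M) \<le> K^2 * M^2 + P^2"
    proof -
      have "0 \<le> (K * M - P)^2" by simp
      then show ?thesis by (simp add: power2_eq_square algebra_simps)
    qed
    ultimately show ?thesis by linarith
  qed
  have pi4: "pi \<le> 4" using pi_less_4 by simp
  have C1: "K^2 * d^2 * N^2 \<le> P^2 + 10 * K^2 * d^3 * S"
  proof -
    have Kd: "K^2 * d^2 > 0" using K d by simp
    have "K^2 * d^2 * N^2 \<le> K^2 * d^2 * (2 * pi * d * S + M^2 / d^2)"
      by (rule mult_left_mono[OF C]) (use Kd in simp)
    also have "\<dots> = 2 * pi * (K^2 * d^3 * S) + K^2 * M^2"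
      using d by (simp add: field_simps power2_eq_square power3_eq_cube)
    also have "\<dots> \<le> 2 * pi * (K^2 * d^3 * S) + P^2 + 2 * K^2 * d^3 * S" using B1 by simp
    also have "2 * pi * (K^2 * d^3 * S) \<le> 2 * 4 * (K^2 * d^3 * S)"
      using pi4 K d S by (intro mult_right_mono mult_left_mono) auto
    finally show ?thesis by (simp add: algebra_simps)
  qed
  have C2: "K^2 * d^2 * N^2 \<le> P^2 + 10 * (K^2 * d^2 * N) * (d * D)"
  proof -
    have "K^2 * d^3 * S \<le> K^2 * d^3 * (D * N)" using SD K d by (intro mult_left_mono) auto
    then show ?thesis using C1 by (simp add: algebra_simps power2_eq_square power3_eq_cube)
  qed
  have N400: "K * d * N \<le> 400 * P"
  proof (rule ccontr)
    assume h: "\<not> K * d * N \<le> 400 * P"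
    then have h': "400 * P < K * d * N" by simp
    have Npos: "N > 0" using h' P K d N by (metis mult_eq_0_iff not_less_iff_gr_or_eq order_le_less mult_nonneg_nonneg zero_le_numeral order_trans less_le_trans)
    have Kd: "K * d > 0" using K d by simp
    have PN: "P * N \<le> K * d * N^2 / 400"
      using mult_right_mono[OF less_imp_le[OF h'] N] by (simp add: power2_eq_square algebra_simps)
    have eN: "e * (K * d) * N^2 \<le> K * d * N^2 / 400"
    proof -
      have "0 \<le> K * d * N^2" using Kd by simp
      from mult_right_mono[OF e(2) this] show ?thesis by (simp add: algebra_simps)
    qed
    have "K * d * (d^2 * D^2) \<le> K * d * (N^2 / 200)"
      using A PN eN by (simp add: power2_eq_square power3_eq_cube algebra_simps)
    then have "d^2 * D^2 \<le> N^2 / 200"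
      using Kd by (meson mult_le_cancel_left_pos)
    moreover have "N^2 / 200 \<le> (N / 14)^2" by (simp add: power_divide)
    ultimately have dD2: "(d * D)^2 \<le> (N / 14)^2"
      by (simp add: power_mult_distrib)
    have dD: "d * D \<le> N / 14"
      using power2_le_imp_le[OF dD2] N by simp
    have "10 * (K^2 * d^2 * N) * (d * D) \<le> 10 * (K^2 * d^2 * N) * (N / 14)"
      using dD K d N by (intro mult_left_mono) auto
    then have "K^2 * d^2 * N^2 \<le> P^2 + 10 * (K^2 * d^2 * N) * (N / 14)" using C2 by linarith
    then have "(K * d * N)^2 \<le> 7 / 2 * P^2"
      by (simp add: power2_eq_square algebra_simps)
    moreover have "(400 * P)^2 < (K * d * N)^2"
      using h' P by (intro power_strict_mono) auto
    ultimately show False using mult_nonneg_nonneg[OF P P] unfolding power2_eq_square by linarith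
  qed
  have A2: "K * d^3 * D^2 \<le> 2 * P * N"
  proof -
    have "e * (K * d) * N^2 = e * (K * d * N) * N" by (simp add: power2_eq_square)
    also have "\<dots> \<le> (1/400) * (400 * P) * N"
      by (rule mult_right_mono[OF mult_mono[OF e(2) N400]]) (use e N K d in auto)
    finally show ?thesis using A by simp
  qed
  define T where "T = d^3 * D * N"
  have T: "T \<ge> 0" unfolding T_def using d D N by simp
  have T2: "(K^2 * T)^2 \<le> (11400 * P^2)^2"
  proof -
    have "(K^2 * T)^2 = K^3 * d^3 * N^2 * (K * d^3 * D^2)"
      unfolding T_def by (simp add: power2_eq_square power3_eq_cube algebra_simps)
    also have "\<dots> \<le> K^3 * d^3 * N^2 * (2 * P * N)"
      by (rule mult_left_mono[OF A2]) (use K d in simp)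
    also have "\<dots> = 2 * P * (K * d * N)^3"
      by (simp add: power2_eq_square power3_eq_cube algebra_simps)
    also have "\<dots> \<le> 2 * P * (400 * P)^3"
      using N400 K d N P by (intro mult_left_mono power_mono) auto
    also have "\<dots> \<le> (11400 * P^2)^2" using P by (simp add: power2_eq_square power3_eq_cube)
    finally show ?thesis .
  qed
  have KT: "K^2 * T \<le> 11400 * P^2"
    using power2_le_imp_le[OF T2] P by simp
  have "K^2 * M^2 \<le> P^2 + 2 * (K^2 * T)"
  proof -
    have "K^2 * d^3 * S \<le> K^2 * T" unfolding T_def using SD K d by (simp add: mult_left_mono algebra_simps)
    then show ?thesis using B1 by simp
  qed
  moreover have "(K * M)^2 = K^2 * M^2" by (simp add: power_mult_distrib)
  moreover have "(160 * P)^2 = 25600 * P^2" by simp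
  moreover have "0 \<le> P^2" by simp
  ultimately have "(K * M)^2 \<le> (160 * P)^2" using KT by linarith
  then have "K * M \<le> 160 * P" by (rule power2_le_imp_le) (use P in simp)
  with N400 show ?thesis by simp
qed

lemma alg2:
  fixes K d P N M L Lt :: real
  assumes K: "K > 0" and d: "0 < d" "d \<le> 1" and P: "P \<ge> 0" and N: "N \<ge> 0" and M: "M \<ge> 0"
    and h1: "K * d * N \<le> 400 * P" and h2: "K * M \<le> 160 * P"
    and hL: "L \<le> sqrt (d^2 * N^2 + M^2) * sqrt (pi / d)"
    and hLt: "Lt \<le> sqrt (M^2) * sqrt 2"
  shows "2 * (3 * L + Lt) \<le> 6000 * P / (K * sqrt d)"
proof -
  define Q where "Q = P / (K * sqrt d)"
  have sd: "sqrt d > 0" "sqrt d \<le> 1" using d by auto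
  have Q: "Q \<ge> 0" unfolding Q_def using P K sd by simp
  have s1: "sqrt (d^2 * N^2 + M^2) \<le> 431 * P / K"
  proof -
    have a: "(K * d * N)^2 \<le> (400 * P)^2" using h1 K d N by (intro power_mono) auto
    have b: "(K * M)^2 \<le> (160 * P)^2" using h2 K M by (intro power_mono) auto
    have "K^2 * (d^2 * N^2 + M^2) = (K * d * N)^2 + (K * M)^2" by (simp add: power_mult_distrib algebra_simps)
    also have "\<dots> \<le> (431 * P)^2"
    proof -
      have "0 \<le> P^2" by simp
      moreover have "(400 * P)^2 = 160000 * P^2" "(160 * P)^2 = 25600 * P^2" "(431 * P)^2 = 185761 * P^2"
        by simp_all
      ultimately show ?thesis using a b by linarith
    qed
    finally have "K^2 * (d^2 * N^2 + M^2) \<le> (431 * P)^2" .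
    then have "d^2 * N^2 + M^2 \<le> (431 * P / K)^2" using K by (simp add: power_divide field_simps)
    then have "sqrt (d^2 * N^2 + M^2) \<le> sqrt ((431 * P / K)^2)" by (rule real_sqrt_le_mono)
    also have "\<dots> = 431 * P / K" using P K by simp
    finally show ?thesis .
  qed
  have s2: "sqrt (pi / d) \<le> 2 / sqrt d"
  proof -
    have "sqrt pi \<le> sqrt 4" using pi_less_4 by (intro real_sqrt_le_mono) simp
    then have "sqrt pi \<le> 2" by simp
    then have "sqrt pi / sqrt d \<le> 2 / sqrt d" using sd by (intro divide_right_mono) auto
    then show ?thesis by (simp add: real_sqrt_divide)
  qed
  have L: "L \<le> 862 * Q"
  proof -
    have "sqrt (d^2 * N^2 + M^2) * sqrt (pi / d) \<le> (431 * P / K) * (2 / sqrt d)"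
      by (rule mult_mono[OF s1 s2]) (use P K d in auto)
    then have "L \<le> (431 * P / K) * (2 / sqrt d)" using hL by linarith
    also have "\<dots> = 862 * Q" unfolding Q_def by simp
    finally show ?thesis .
  qed
  have Lt: "Lt \<le> 320 * Q"
  proof -
    have "sqrt 2 \<le> sqrt 4" by (intro real_sqrt_le_mono) simp
    then have s2: "sqrt 2 \<le> 2" by simp
    have "Lt \<le> M * sqrt 2" using hLt M by simp
    also have "\<dots> \<le> M * 2" using s2 M by (rule mult_left_mono)
    also have "M * 2 \<le> 320 * P / K" using h2 K by (simp add: field_simps)
    also have "320 * P / K \<le> 320 * P / K / sqrt d"
    proof -
      have "0 \<le> 320 * P / K" using P K by simp
      then have "320 * P / K * sqrt d \<le> 320 * P / K" using sd by (intro mult_left_le) auto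
      then show ?thesis by (simp only: pos_le_divide_eq[OF sd(1)])
    qed
    also have "\<dots> = 320 * Q" unfolding Q_def by simp
    finally show ?thesis .
  qed
  have e: "2 * (3 * L + Lt) = 6 * L + 2 * Lt" by simp
  have "6 * L + 2 * Lt \<le> 6000 * Q" using L Lt Q by linarith
  then have "2 * (3 * L + Lt) \<le> 6000 * Q" unfolding e .
  then show ?thesis unfolding Q_def by simp
qed

lemma powr_facts:
  fixes nu K :: real
  assumes nu: "nu > 0" and K: "K > 0"
  shows "(nu / K) powr (1/3) > 0"
    and "((nu / K) powr (1/3))^3 = nu / K"
    and "K * (nu / K) powr (1/3) = nu powr (1/3) * K powr (2/3)"
    and "nu powr (-1/6) * K powr (-5/6) = 1 / (K * sqrt ((nu / K) powr (1/3)))"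
proof -
  have q: "nu / K > 0" using nu K by simp
  show "(nu / K) powr (1/3) > 0" using nu K by simp
  have "((nu / K) powr (1/3))^3 = (nu / K) powr (of_nat 3 * (1/3))"
    by (rule powr_power) (use nu K in simp)
  also have "\<dots> = nu / K" using nu K by simp
  finally show "((nu / K) powr (1/3))^3 = nu / K" .
  have Ksplit: "K = K powr (1/3) * K powr (2/3)"
  proof -
    have "K powr (1/3) * K powr (2/3) = K powr (1/3 + 2/3)" by (simp only: powr_add)
    also have "\<dots> = K" using K by simp
    finally show ?thesis by simp
  qed
  have K13: "K powr (1/3) > 0" using K by simp
  have "K * (nu / K) powr (1/3) = K powr (1/3) * K powr (2/3) * (nu powr (1/3) / K powr (1/3))"
    using Ksplit by (simp add: powr_divide)
  also have "\<dots> = nu powr (1/3) * K powr (2/3)" using K13 by (simp add: field_simps)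
  finally show "K * (nu / K) powr (1/3) = nu powr (1/3) * K powr (2/3)" .
  have sq: "sqrt ((nu / K) powr (1/3)) = nu powr (1/6) / K powr (1/6)"
  proof -
    have "sqrt ((nu / K) powr (1/3)) = ((nu / K) powr (1/3)) powr (1/2)"
      by (simp add: powr_half_sqrt)
    also have "\<dots> = (nu / K) powr (1/6)" by (simp add: powr_powr)
    also have "\<dots> = nu powr (1/6) / K powr (1/6)" by (simp add: powr_divide)
    finally show ?thesis .
  qed
  have Ksplit2: "K = K powr (1/6) * K powr (5/6)"
  proof -
    have "K powr (1/6) * K powr (5/6) = K powr (1/6 + 5/6)" by (simp only: powr_add)
    also have "\<dots> = K" using K by simp
    finally show ?thesis by simp
  qed
  have K16: "K powr (1/6) > 0" using K by simp
  have "K * sqrt ((nu / K) powr (1/3)) = K powr (5/6) * nu powr (1/6)"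
    unfolding sq using K16 by (subst Ksplit2) (simp add: field_simps)
  moreover have "nu powr (-1/6) * K powr (-5/6) = 1 / (K powr (5/6) * nu powr (1/6))"
    using powr_minus[of nu "1/6"] powr_minus[of K "5/6"] by (simp add: field_simps)
  ultimately show "nu powr (-1/6) * K powr (-5/6) = 1 / (K * sqrt ((nu / K) powr (1/3)))" by simp
qed

lemma sinh_ratio:
  fixes k y :: real
  assumes k: "k \<noteq> 0" and y: "0 \<le> y" "y \<le> 2"
  shows "\<bar>sinh (k * y) / sinh (2 * k)\<bar> \<le> 1"
proof -
  have e1: "\<bar>k * y\<bar> = \<bar>k\<bar> * y" using y by (simp add: abs_mult)
  have e2: "\<bar>2 * k\<bar> = \<bar>k\<bar> * 2" by (simp add: abs_mult)
  have "\<bar>k\<bar> * y \<le> \<bar>k\<bar> * 2" by (rule mult_left_mono[OF y(2) abs_ge_zero])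
  then have "\<bar>k * y\<bar> \<le> \<bar>2 * k\<bar>" unfolding e1 e2 .
  then have "sinh \<bar>k * y\<bar> \<le> sinh \<bar>2 * k\<bar>" by (simp only: sinh_real_le_iff)
  then have a: "\<bar>sinh (k * y)\<bar> \<le> \<bar>sinh (2 * k)\<bar>" by (simp only: sinh_real_abs)
  have "\<bar>sinh (2 * k)\<bar> > 0" using k by simp
  then show ?thesis using a by (simp add: abs_divide divide_le_eq_1)
qed

context rs begin

lemma cbound:
  fixes phi :: "real \<Rightarrow> real" and a :: real
  assumes phic: "continuous_on {-1..1} phi" and phib: "\<And>s. s \<in> {-1..1} \<Longrightarrow> \<bar>phi s\<bar> \<le> 1"
    and a: "0 \<le> a" and ab: "\<And>s. s \<in> {-1..1} \<Longrightarrow> a \<le> 3 + \<bar>s - lam\<bar>"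
  shows "a * cmod (integral {-1..1} (\<lambda>y. complex_of_real (phi y) * w y))
     \<le> 3 * integral {-1..1} (\<lambda>s. cmod (w s)) + integral {-1..1} (\<lambda>s. \<bar>s - lam\<bar> * cmod (w s))"
proof -
  have "cmod (integral {-1..1} (\<lambda>y. complex_of_real (phi y) * w y)) \<le> integral {-1..1} (\<lambda>s. cmod (w s))"
  proof (rule integral_norm_bound_integral)
    show "(\<lambda>y. complex_of_real (phi y) * w y) integrable_on {-1..1}"
      by (intro cont_int continuous_intros phic wc)
    show "(\<lambda>s. cmod (w s)) integrable_on {-1..1}" by (intro cont_int continuous_intros wc)
    fix s :: real assume s: "s \<in> {-1..1}"
    show "norm (complex_of_real (phi s) * w s) \<le> cmod (w s)"
      using phib[OF s] by (simp add: norm_mult mult_left_le_one_le)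
  qed
  then have "a * cmod (integral {-1..1} (\<lambda>y. complex_of_real (phi y) * w y)) \<le> a * integral {-1..1} (\<lambda>s. cmod (w s))"
    using a by (rule mult_left_mono)
  also have "\<dots> = integral {-1..1} (\<lambda>s. a * cmod (w s))" by simp
  also have "\<dots> \<le> integral {-1..1} (\<lambda>s. 3 * cmod (w s) + \<bar>s - lam\<bar> * cmod (w s))"
    by (rule integral_le) (auto intro!: cont_int continuous_intros wc mult_right_mono ab simp: distrib_right[symmetric])
  also have "\<dots> = 3 * integral {-1..1} (\<lambda>s. cmod (w s)) + integral {-1..1} (\<lambda>s. \<bar>s - lam\<bar> * cmod (w s))"
    by (subst integral_add) (auto intro!: cont_int continuous_intros wc)
  finally show ?thesis .
qed

lemma final_bound:
  fixes K d e :: real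
  assumes K: "K = \<bar>k\<bar>" "K > 0" and d: "0 < d" "d \<le> 1" and nud: "nu = K * d^3"
    and emd: "em = e * (K * d)" and e: "0 \<le> e" "e \<le> 1/400"
  shows "(1 + \<bar>lam - 1\<bar>) * cmod (c1 k w) + (1 + \<bar>lam + 1\<bar>) * cmod (c2 k w) \<le> 6000 * sqrt P2 / (K * sqrt d)"
proof -
  have k0: "k \<noteq> 0" using K by simp
  define L where "L = integral {-1..1} (\<lambda>s. cmod (w s))"
  define Lt where "Lt = integral {-1..1} (\<lambda>s. \<bar>s - lam\<bar> * cmod (w s))"
  have c1b: "(1 + \<bar>lam - 1\<bar>) * cmod (c1 k w) \<le> 3 * L + Lt"
    unfolding c1_def L_def Lt_def
  proof (rule cbound)
    show "continuous_on {-1..1} (\<lambda>y. sinh (k * (y + 1)) / sinh (2 * k))"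
      by (intro continuous_intros) (use k0 in auto)
    show "\<bar>sinh (k * (s + 1)) / sinh (2 * k)\<bar> \<le> 1" if "s \<in> {-1..1}" for s
      using sinh_ratio[OF k0, of "s + 1"] that by auto
  qed auto
  have c2b: "(1 + \<bar>lam + 1\<bar>) * cmod (c2 k w) \<le> 3 * L + Lt"
    unfolding c2_def L_def Lt_def
  proof (rule cbound)
    show "continuous_on {-1..1} (\<lambda>y. sinh (k * (1 - y)) / sinh (2 * k))"
      by (intro continuous_intros) (use k0 in auto)
    show "\<bar>sinh (k * (1 - s)) / sinh (2 * k)\<bar> \<le> 1" if "s \<in> {-1..1}" for s
      using sinh_ratio[OF k0, of "1 - s"] that by auto
  qed auto
  define P N D M where "P = sqrt P2" "N = sqrt N2" "D = sqrt D2" "M = sqrt M2"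
  have nn0: "0 \<le> P2" "0 \<le> N2" "0 \<le> D2" "0 \<le> M2"
    by (rule P2_nonneg, rule N2_nonneg, rule D2_nonneg, rule M2_nonneg)
  have P2e: "P2 = P^2" "N2 = N^2" "D2 = D^2" "M2 = M^2"
    unfolding P_N_D_M_def using nn0 by simp_all
  have nn: "P \<ge> 0" "N \<ge> 0" "D \<ge> 0" "M \<ge> 0" unfolding P_N_D_M_def by (simp_all add: nn0)
  have sPN: "sqrt P2 = P" "sqrt N2 = N" by (simp_all add: P_N_D_M_def)
  have eA: "(nu * k^2 - em) * N^2 + nu * D^2 \<le> P * N"
    using estA unfolding sPN unfolding P2e(2) P2e(3) by (simp add: mult.commute)
  have A: "K * d^3 * D^2 \<le> P * N + e * (K * d) * N^2"
  proof -
    have "0 \<le> nu * k^2 * N^2" using nu by simp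
    moreover have "(nu * k^2 - em) * N^2 = nu * k^2 * N^2 - em * N^2" by (simp add: algebra_simps)
    moreover have "K * d^3 * D^2 = nu * D^2" by (simp add: nud)
    moreover have "e * (K * d) * N^2 = em * N^2" by (simp add: emd)
    ultimately show ?thesis using eA by linarith
  qed
  have sM: "sqrt M2 = M" by (simp add: P_N_D_M_def)
  have B: "K * M^2 \<le> P * M + K * d^3 * SS"
  proof -
    have "\<bar>k\<bar> * M2 \<le> sqrt P2 * sqrt M2 + nu * SS" by (rule estB)
    then have "\<bar>k\<bar> * M^2 \<le> P * M + nu * SS" unfolding sPN sM unfolding P2e(4) .
    then show ?thesis unfolding K(1)[symmetric] nud .
  qed
  have SD: "SS \<le> D * N" using SS_bound unfolding P_N_D_M_def .
  have C: "N^2 \<le> 2 * pi * d * SS + M^2 / d^2"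
    using split_bound[OF d(1)] unfolding P2e by (simp add: algebra_simps)
  have ab: "K * d * N \<le> 400 * P \<and> K * M \<le> 160 * P"
    by (rule alg1[OF K(2) d e nn SS_nonneg A B SD C])
  have hL: "L \<le> sqrt (d^2 * N^2 + M^2) * sqrt (pi / d)"
    using L1_bound[OF d(1)] unfolding L_def P2e .
  have hLt: "Lt \<le> sqrt (M^2) * sqrt 2"
    using L1t_bound unfolding Lt_def P2e .
  have "2 * (3 * L + Lt) \<le> 6000 * P / (K * sqrt d)"
    using alg2[OF K(2) d nn(1) nn(2) nn(4)] ab hL hLt by blast
  moreover have "(1 + \<bar>lam - 1\<bar>) * cmod (c1 k w) + (1 + \<bar>lam + 1\<bar>) * cmod (c2 k w) \<le> (3 * L + Lt) + (3 * L + Lt)"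
    by (rule add_mono[OF c1b c2b])
  moreover have "(3 * L + Lt) + (3 * L + Lt) = 2 * (3 * L + Lt)" by simp
  ultimately show ?thesis unfolding P_N_D_M_def by linarith
qed

end

theorem lemma2p8:
  shows "\<exists>eps0 > 0. \<exists>C > 0. \<forall>(nu::real) (k::real) (lam::real) (eps::real)
            (F::real \<Rightarrow> complex) (w::real \<Rightarrow> complex).
    0 < nu \<and> nu \<le> 1 \<and> 10 * nu \<le> \<bar>k\<bar> \<and> \<bar>k\<bar> < 1 \<and> 0 \<le> eps \<and> eps \<le> eps0 \<and>
    is_L2 F \<and> resolvent_sol nu k lam eps F w \<longrightarrow>
      (1 + \<bar>lam - 1\<bar>) * cmod (c1 k w) + (1 + \<bar>lam + 1\<bar>) * cmod (c2 k w)
        \<le> C * nu powr (-1/6) * \<bar>k\<bar> powr (-5/6) * L2norm F"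
proof -
  have main: "\<forall>(nu::real) (k::real) (lam::real) (eps::real)
            (F::real \<Rightarrow> complex) (w::real \<Rightarrow> complex).
    0 < nu \<and> nu \<le> 1 \<and> 10 * nu \<le> \<bar>k\<bar> \<and> \<bar>k\<bar> < 1 \<and> 0 \<le> eps \<and> eps \<le> 1/400 \<and>
    is_L2 F \<and> resolvent_sol nu k lam eps F w \<longrightarrow>
      (1 + \<bar>lam - 1\<bar>) * cmod (c1 k w) + (1 + \<bar>lam + 1\<bar>) * cmod (c2 k w)
        \<le> 6000 * nu powr (-1/6) * \<bar>k\<bar> powr (-5/6) * L2norm F"
  proof (intro allI impI)
  fix nu k lam eps :: real and F w :: "real \<Rightarrow> complex"
  assume h: "0 < nu \<and> nu \<le> 1 \<and> 10 * nu \<le> \<bar>k\<bar> \<and> \<bar>k\<bar> < 1 \<and> 0 \<le> eps \<and> eps \<le> 1/400 \<and>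
    is_L2 F \<and> resolvent_sol nu k lam eps F w"
  then have nu: "0 < nu" and kb: "10 * nu \<le> \<bar>k\<bar>" "\<bar>k\<bar> < 1" and e: "0 \<le> eps" "eps \<le> 1/400"
    and L2: "is_L2 F" and rs: "resolvent_sol nu k lam eps F w" by auto
  define K where "K = \<bar>k\<bar>"
  have K: "K > 0" using nu kb unfolding K_def by linarith
  define d where "d = (nu / K) powr (1/3)"
  define em where "em = eps * nu powr (1/3) * \<bar>k\<bar> powr (2/3)"
  have d0: "d > 0" and d3: "d^3 = nu / K" and Kd: "K * d = nu powr (1/3) * K powr (2/3)"
    and rhs: "nu powr (-1/6) * K powr (-5/6) = 1 / (K * sqrt d)"
    using powr_facts[OF nu K] unfolding d_def by auto
  have nud: "nu = K * d^3" using d3 K by (simp add: field_simps)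
  have d1: "d \<le> 1"
  proof -
    have "nu / K \<le> 1" using kb nu K unfolding K_def by (simp add: divide_le_eq_1)
    then have "d^3 \<le> 1^3" using d3 by simp
    show ?thesis
    proof (rule ccontr)
      assume "\<not> d \<le> 1"
      then have "1 < d" by simp
      then have "1 < d^3" by (rule one_less_power) simp
      with \<open>d^3 \<le> 1^3\<close> show False by simp
    qed
  qed
  have emd: "em = eps * (K * d)" unfolding em_def using Kd unfolding K_def by simp
  obtain v where wd: "\<forall>y\<in>{-1..1}. (w has_vector_derivative v y) (at y within {-1..1})"
    and vG: "\<forall>y\<in>{-1..1}. ((\<lambda>s. complex_of_real (k^2) * w s
               + (\<i> * complex_of_real (k * (s - lam)) * w s
                  - complex_of_real (eps * nu powr (1/3) * \<bar>k\<bar> powr (2/3)) * w s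
                  - F s) / complex_of_real nu) has_integral (v y - v (-1))) {-1..y}"
    and wm1: "w (-1) = 0" and w1: "w 1 = 0"
    using rs unfolding resolvent_sol_def by blast
  interpret R: rs nu k lam em F w v
  proof
    show "0 < nu" by (rule nu)
    show "w (-1) = 0" "w 1 = 0" by (rule wm1, rule w1)
    show "\<And>y. y \<in> {-1..1} \<Longrightarrow> (w has_vector_derivative v y) (at y within {-1..1})" using wd by blast
    show "\<And>y. y \<in> {-1..1} \<Longrightarrow> ((\<lambda>s. complex_of_real (k^2) * w s
               + (\<i> * complex_of_real (k * (s - lam)) * w s
                  - complex_of_real em * w s
                  - F s) / complex_of_real nu) has_integral (v y - v (-1))) {-1..y}"
      using vG unfolding em_def by blast
    show "F \<in> borel_measurable (lebesgue_on {-1..1})" using L2 unfolding is_L2_def by blast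
    show "integrable (lebesgue_on {-1..1}) (\<lambda>y. (cmod (F y))^2)" using L2 unfolding is_L2_def by blast
  qed
  have L2n: "L2norm F = sqrt R.P2"
  proof -
    have "integrable (lebesgue_on {-1..1}) (\<lambda>y. (cmod (F y))^2)" using L2 unfolding is_L2_def by blast
    then have "(LINT y|lebesgue_on {-1..1}. (cmod (F y))^2) = integral {-1..1} (\<lambda>y. (cmod (F y))^2)"
      by (rule lebesgue_integral_eq_integral) simp
    then show ?thesis unfolding L2norm_def R.P2_def by simp
  qed
  have fb: "(1 + \<bar>lam - 1\<bar>) * cmod (c1 k w) + (1 + \<bar>lam + 1\<bar>) * cmod (c2 k w) \<le> 6000 * sqrt R.P2 / (K * sqrt d)"
    by (rule R.final_bound[OF K_def K d0 d1 nud emd e])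
  also have "\<dots> = 6000 * (1 / (K * sqrt d)) * sqrt R.P2" by simp
  also have "\<dots> = 6000 * (nu powr (-1/6) * K powr (-5/6)) * sqrt R.P2" by (simp only: rhs)
  also have "\<dots> = 6000 * nu powr (-1/6) * \<bar>k\<bar> powr (-5/6) * L2norm F"
    unfolding L2n K_def by (simp only: mult.assoc)
  finally show "(1 + \<bar>lam - 1\<bar>) * cmod (c1 k w) + (1 + \<bar>lam + 1\<bar>) * cmod (c2 k w)
        \<le> 6000 * nu powr (-1/6) * \<bar>k\<bar> powr (-5/6) * L2norm F" .
  qed
  show ?thesis
    apply (rule exI[of _ "1/400::real"])
    apply (rule conjI)
     apply simp
    apply (rule exI[of _ "6000::real"])
    apply (rule conjI)
     apply simp
    apply (rule main)
    done
qed

end
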